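(* Let $\mathbf{p}=(p_1,p_2,p_3,p_4)$ with all $p_i>0$, and let $\mathcal{T}_4(\mathbf{p})$ be the tessellation of $\mathbb{R}^4$ constructed below. Then there is no simplex $K\in\mathcal{T}_4(\mathbf{p})$ having an edge whose direction vector is $\pm p_1e_1\pm p_2e_2\pm 2p_3e_3\pm 3p_4e_4$ for any choice of the signs, where $e_1,\dots,e_4$ is the standard basis of $\mathbb{R}^4$. (Equivalently, the vector $(1,1,2,3)$ is not realized as an edge pattern $(|v_1|/p_1,\dots,|v_4|/p_4)$ of an edge $v$ of an element of $\mathcal{T}_4(\mathbf{p})$.)
   Context: Construction of $\mathcal{T}_d(\mathbf{p})$ for $d=4$: inductively for $m=1,\dots,4$ define a collection $\mathcal{T}_m$ of $m$-simplices in $\mathbb{R}^m$ with a vertex coloring $c_m$ with colors in $\{0,\dots,m\}$. For $m=1$: vertices $A_z=zp_1$ ($z\in\mathbb{Z}$), simplices the segments between $zp_1$ and $(z+1)p_1$, $c_1(A_z)=z\bmod 2$. For $2\le m\le 4$: for each $K\in\mathcal{T}_{m-1}$ label its vertices $A_0,\dots,A_{m-1}$ so that $c_{m-1}(A_i)=i$, set $B^K_j=(A_{j\bmod m},jp_m)\in\mathbb{R}^m$ for $j\in\mathbb{Z}$, and $L^{K,z}=\operatorname{conv}\{B^K_z,\dots,B^K_{z+m}\}$ for $z\in\mathbb{Z}$; $\mathcal{T}_m=\{L^{K,z}\}$, with vertices $(A,jp_m)$ ($A$ a vertex of $\mathcal{T}_{m-1}$, $j\equiv c_{m-1}(A)\pmod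 m$) colored $c_m((A,jp_m))=j\bmod(m+1)$. Then $\mathcal{T}_4(\mathbf{p})=\mathcal{T}_4$. An edge of a simplex is the segment between two of its vertices; its direction vector is the difference of these vertices. *)

theory Defs
  imports Main "HOL.Real"
begin

(* A point of R^m is a real list of length m.  A simplex of T_m is represented
   by the list of its m+1 vertices, where the vertex at position c is the
   (unique) vertex of colour c (colour c_m). *)

definition seg1 :: "(nat \<Rightarrow> real) \<Rightarrow> int \<Rightarrow> real list list" where
  "seg1 p z = (if even z then [[of_int z * p 1], [of_int (z + 1) * p 1]]
                          else [[of_int (z + 1) * p 1], [of_int z * p 1]])"

definition Bvert :: "(nat \<Rightarrow> real) \<Rightarrow> nat \<Rightarrow> real list list \<Rightarrow> int \<Rightarrow> real list" where
  "Bvert p m K j = K ! nat (j mod int m) @ [of_int j * p m]"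

(* L^{K,z} = conv{B_z,...,B_{z+m}}, listed by colour c_m(B_j) = j mod (m+1) *)
definition liftL :: "(nat \<Rightarrow> real) \<Rightarrow> nat \<Rightarrow> real list list \<Rightarrow> int \<Rightarrow> real list list" where
  "liftL p m K z = map (\<lambda>c. Bvert p m K (z + (int c - z) mod int (m + 1))) [0..<m + 1]"

fun tess :: "(nat \<Rightarrow> real) \<Rightarrow> nat \<Rightarrow> real list list set" where
  "tess p 0 = {}"
| "tess p (Suc 0) = {seg1 p z | z. True}"
| "tess p (Suc (Suc n)) = {liftL p (Suc (Suc n)) K z | K z. K \<in> tess p (Suc n)}"

definition edge_dir :: "real list \<Rightarrow> real list \<Rightarrow> real list" where
  "edge_dir u v = map2 (-) v u"

end

theory Submission
  imports Defs
begin

lemma liftL_nth: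
  "c < m + 1 \<Longrightarrow> liftL p m K z ! c = Bvert p m K (z + (int c - z) mod int (m + 1))"
  unfolding liftL_def by (simp del: upt_Suc)

lemma tess2_vert:
  assumes "K \<in> tess p 2" "i < 3"
  shows "\<exists>x1 x2. K ! i = [x1, x2]"
proof -
  obtain S w where K: "K = liftL p 2 S w" and S: "S \<in> tess p 1"
    using assms(1) by (auto simp: numeral_2_eq_2)
  obtain z where Sz: "S = seg1 p z" using S by auto
  define t where "t = w + (int i - w) mod int 3"
  have "K ! i = S ! nat (t mod 2) @ [of_int t * p 2]"
    using assms(2) unfolding K t_def
    by (simp add: liftL_nth Bvert_def)
  moreover have "t mod 2 = 0 \<or> t mod 2 = 1" by presburger
  hence "nat (t mod 2) = 0 \<or> nat (t mod 2) = 1" by auto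
  ultimately show ?thesis unfolding Sz seg1_def by auto
qed

lemma tess4_vert:
  assumes "K \<in> tess p 4"
  shows "\<exists>w. \<forall>i<5. \<exists>x1 x2 a a'. K ! i = [x1, x2, of_int a' * p 3, of_int a * p 4]
            \<and> a' mod 4 = a mod 4 \<and> w \<le> a' \<and> a' \<le> w + 3"
proof -
  have t4: "tess p 4 = {liftL p 4 K z | K z. K \<in> tess p 3}"
    by (simp add: numeral_eq_Suc)
  have t3: "tess p 3 = {liftL p 3 K z | K z. K \<in> tess p 2}"
    by (simp add: numeral_eq_Suc)
  obtain L z where K: "K = liftL p 4 L z" and L: "L \<in> tess p 3" using assms t4 by auto
  obtain M w where Lw: "L = liftL p 3 M w" and M: "M \<in> tess p 2" using L t3 by auto
  show ?thesis
  proof (rule exI, intro allI impI)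
    fix i :: nat assume i: "i < 5"
    define a where "a = z + (int i - z) mod 5"
    have Ki: "K ! i = L ! nat (a mod 4) @ [of_int a * p 4]"
      using i unfolding K a_def by (simp add: liftL_nth Bvert_def)
    define c where "c = nat (a mod 4)"
    have c: "c < 4" unfolding c_def by simp
    define a' where "a' = w + (int c - w) mod 4"
    have Lc: "L ! c = M ! nat (a' mod 3) @ [of_int a' * p 3]"
      using c unfolding Lw a'_def by (simp add: liftL_nth Bvert_def)
    obtain x1 x2 where Mx: "M ! nat (a' mod 3) = [x1, x2]"
      using tess2_vert[OF M, of "nat (a' mod 3)"] by (auto simp: nat_less_iff)
    have "K ! i = [x1, x2, of_int a' * p 3, of_int a * p 4]"
      using Ki Lc Mx unfolding c_def by simp
    moreover have "int c = a mod 4" unfolding c_def by simp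
    hence "a' mod 4 = a mod 4" unfolding a'_def by presburger
    moreover have "w \<le> a' \<and> a' \<le> w + 3" unfolding a'_def by auto
    ultimately show "\<exists>x1 x2 a a'. K ! i = [x1, x2, of_int a' * p 3, of_int a * p 4]
            \<and> a' mod 4 = a mod 4 \<and> w \<le> a' \<and> a' \<le> w + 3" by blast
  qed
qed

theorem lemma2:
  fixes p :: "nat \<Rightarrow> real"
  assumes "\<forall>i\<in>{1..4}. p i > 0"
  shows "\<not> (\<exists>K \<in> tess p 4. \<exists>i<5. \<exists>j<5. i \<noteq> j \<and>
            (\<exists>s1 s2 s3 s4 :: real. s1 \<in> {-1, 1} \<and> s2 \<in> {-1, 1} \<and> s3 \<in> {-1, 1} \<and> s4 \<in> {-1, 1} \<and>
               edge_dir (K ! i) (K ! j) = [s1 * p 1, s2 * p 2, s3 * 2 * p 3, s4 * 3 * p 4]))"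
proof
  assume "\<exists>K \<in> tess p 4. \<exists>i<5. \<exists>j<5. i \<noteq> j \<and>
            (\<exists>s1 s2 s3 s4 :: real. s1 \<in> {-1, 1} \<and> s2 \<in> {-1, 1} \<and> s3 \<in> {-1, 1} \<and> s4 \<in> {-1, 1} \<and>
               edge_dir (K ! i) (K ! j) = [s1 * p 1, s2 * p 2, s3 * 2 * p 3, s4 * 3 * p 4])"
  then obtain K i j s1 s2 s3 s4 where K: "K \<in> tess p 4" and ij: "i < 5" "j < 5"
    and s: "s3 \<in> {-1, 1}" "s4 \<in> {-1, 1 :: real}"
    and e: "edge_dir (K ! i) (K ! j) = [s1 * p 1, s2 * p 2, s3 * 2 * p 3, s4 * 3 * p 4]"
    by blast
  have p3: "p 3 > 0" and p4: "p 4 > 0" using assms by auto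
  obtain w where W: "\<forall>i<5. \<exists>x1 x2 a a'. K ! i = [x1, x2, of_int a' * p 3, of_int a * p 4]
            \<and> a' mod 4 = a mod 4 \<and> w \<le> a' \<and> a' \<le> w + 3"
    using tess4_vert[OF K] by blast
  obtain x1 x2 a a' where A: "K ! i = [x1, x2, of_int a' * p 3, of_int a * p 4]"
     "a' mod 4 = a mod 4" "w \<le> a'" "a' \<le> w + 3" using W ij by blast
  obtain y1 y2 b b' where B: "K ! j = [y1, y2, of_int b' * p 3, of_int b * p 4]"
     "b' mod 4 = b mod 4" "w \<le> b'" "b' \<le> w + 3" using W ij by blast
  from e have e3: "of_int b' * p 3 - of_int a' * p 3 = s3 * 2 * p 3"
    and e4: "of_int b * p 4 - of_int a * p 4 = s4 * 3 * p 4"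
    unfolding A B edge_dir_def by simp_all
  have "real_of_int (b' - a') = s3 * 2" using e3 p3
    by (simp add: left_diff_distrib[symmetric])
  hence d3: "b' - a' = 2 \<or> b' - a' = -2" using s(1) by auto
  have "real_of_int (b - a) = s4 * 3" using e4 p4
    by (simp add: left_diff_distrib[symmetric])
  hence d4: "b - a = 3 \<or> b - a = -3" using s(2) by auto
  from d3 d4 A(2) B(2) show False by presburger
qed

end
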